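(* Let $\bar J$ be the standard complex structure on $\mathbb C^2$ and $\bar D$ the standard flat connection. Then $(\mathbb C^2,\bar J,[\bar D])$ can be realized as a projective special complex manifold such that $\bar B\neq0$, $\bar{\mathcal B}=0$ and $\bar c=0$, by means of a (trivial) principal $S^1$-bundle with a flat connection $\eta$ (i.e. with respect to a principal connection of type $(1,0)$ on the $\mathbb C^*$-bundle whose $\sqrt{-1}$-component is $\eta$). The resulting conical special complex manifold is non-trivial and of horizontal type with respect to this connection.
   Context: A conical special complex manifold $(M,J,\nabla,\xi)$: complex manifold with torsion-free flat $\nabla$ such that $A:=\nabla J$ is symmetric, nowhere-vanishing $\xi$ with $\nabla\xi=\mathrm{Id}$, $L_\xi J=0$; it is trivial if $A=0$. Realizing $(\bar M,\bar J,\mathcal P)$ as a projective special complex manifold means: finding such $M$ on which $\xi-\sqrt{-1}J\xi$ generates a principal $\mathbb C^*$-action with bundle $\pi:M\to\bar M$ inducing $\bar J$, such that the canonical c-projective structure equals $\mathcal P$. Canonical c-projective structure: the c-projective class of $D^{(\omega)}_XY:=\pi_*(D_{\tilde X}\tilde Y)$, $D=\nabla-\frac12JA$, $\tilde X$ horizontal lifts for a principal connection $\omega$ with $J$-invariant kernel (independent of $\omega$). Given such $\omega$ and a local trivialization with fibre polar coordinates $(r,\theta)$, $\xi=r\partial_r$, $J\xi=\partial_\theta$, the tensor $B:=e^{2\theta J}A$ ($e^{sJ}=\cos s\,\mathrm{Id}+\sin s\,J$) is projectable and decomposes as $B_{\tilde X}\tilde Y=(\bar B_XY)^{\sim}+\bar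 c(X,Y)\xi+\bar c(X,\bar JY)J\xi$, defining local tensors $\bar B$ (symmetric, anticommuting with $\bar J$) and $\bar c$ on the base; $\bar{\mathcal B}(X,Y):=\mathrm{tr}(\bar B_X\bar B_Y)$ is globally defined. $M$ is of horizontal type with respect to $\omega$ if $\nabla J$ takes only horizontal values (equivalently $\bar c=0$). *)

theory Defs
  imports "HOL-Analysis.Analysis"
begin

text \<open>The total space is the trivial bundle
  M = C^2 x C^* (an open subset of C^3 = R^6), with base C^2 and the standard
  C^*-action a.(z1,z2,w) = (z1,z2,a w).  Tangent vectors of M are elements of
  C^3, tangent vectors of the base are elements of C^2 (real vector spaces).\<close>

type_synonym tv = "complex \<times> complex \<times> complex"
type_synonym bv = "complex \<times> complex"

definition Mset :: "tv set" where
  "Mset = {p. snd (snd p) \<noteq> 0}"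

text \<open>bundle projection (it is linear, so it is also its own differential)\<close>
definition pr :: "tv \<Rightarrow> bv" where
  "pr v = (fst v, fst (snd v))"

definition fib :: "tv \<Rightarrow> complex" where
  "fib v = snd (snd v)"

text \<open>the C^*-action (linear in the point, hence also its differential)\<close>
definition Rmult :: "complex \<Rightarrow> tv \<Rightarrow> tv" where
  "Rmult a v = (fst v, fst (snd v), a * snd (snd v))"

text \<open>generator of the R_{>0}-part of the action: xi = r d/dr\<close>
definition xi :: "tv \<Rightarrow> tv" where
  "xi p = (0, 0, fib p)"

definition Jbar :: "bv \<Rightarrow> bv" where
  "Jbar x = (\<i> * fst x, \<i> * snd x)"

coinductive smooth_on :: "'a::real_normed_vector set \<Rightarrow> ('a \<Rightarrow> 'b::real_normed_vector) \<Rightarrow> bool"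
  for S where
  "f differentiable_on S \<Longrightarrow> (\<forall>v. smooth_on S (\<lambda>p. frechet_derivative f (at p) v))
     \<Longrightarrow> smooth_on S f"

text \<open>Affine connection nabla = d + G (Christoffel tensor G) on the open set Mset of R^6.\<close>

definition nablaV :: "(tv \<Rightarrow> tv \<Rightarrow>\<^sub>L tv \<Rightarrow>\<^sub>L tv) \<Rightarrow> (tv \<Rightarrow> tv) \<Rightarrow> tv \<Rightarrow> tv \<Rightarrow> tv" where
  "nablaV G Y p u = frechet_derivative Y (at p) u + blinfun_apply (blinfun_apply (G p) u) (Y p)"

text \<open>A = nabla J :  A p u v = (nabla_u J) v\<close>
definition nablaJ :: "(tv \<Rightarrow> tv \<Rightarrow>\<^sub>L tv \<Rightarrow>\<^sub>L tv) \<Rightarrow> (tv \<Rightarrow> tv \<Rightarrow>\<^sub>L tv) \<Rightarrow> tv \<Rightarrow> tv \<Rightarrow> tv \<Rightarrow> tv" where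
  "nablaJ G J p u v =
     blinfun_apply (frechet_derivative J (at p) u) v
     + blinfun_apply (blinfun_apply (G p) u) (blinfun_apply (J p) v)
     - blinfun_apply (J p) (blinfun_apply (blinfun_apply (G p) u) v)"

definition curv :: "(tv \<Rightarrow> tv \<Rightarrow>\<^sub>L tv \<Rightarrow>\<^sub>L tv) \<Rightarrow> tv \<Rightarrow> tv \<Rightarrow> tv \<Rightarrow> tv \<Rightarrow> tv" where
  "curv G p u v w =
     blinfun_apply (blinfun_apply (frechet_derivative G (at p) u) v) w
     - blinfun_apply (blinfun_apply (frechet_derivative G (at p) v) u) w
     + blinfun_apply (blinfun_apply (G p) u) (blinfun_apply (blinfun_apply (G p) v) w)
     - blinfun_apply (blinfun_apply (G p) v) (blinfun_apply (blinfun_apply (G p) u) w)"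

text \<open>Nijenhuis tensor of J, computed with the (torsion-free) coordinate derivative\<close>
definition nijenhuis :: "(tv \<Rightarrow> tv \<Rightarrow>\<^sub>L tv) \<Rightarrow> tv \<Rightarrow> tv \<Rightarrow> tv \<Rightarrow> tv" where
  "nijenhuis J p u v =
     blinfun_apply (frechet_derivative J (at p) (blinfun_apply (J p) u)) v
     - blinfun_apply (frechet_derivative J (at p) (blinfun_apply (J p) v)) u
     + blinfun_apply (J p) (blinfun_apply (frechet_derivative J (at p) v) u)
     - blinfun_apply (J p) (blinfun_apply (frechet_derivative J (at p) u) v)"

definition lieJ :: "(tv \<Rightarrow> tv \<Rightarrow>\<^sub>L tv) \<Rightarrow> (tv \<Rightarrow> tv) \<Rightarrow> tv \<Rightarrow> tv \<Rightarrow> tv" where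
  "lieJ J Y p v =
     blinfun_apply (frechet_derivative J (at p) (Y p)) v
     - frechet_derivative Y (at p) (blinfun_apply (J p) v)
     + blinfun_apply (J p) (frechet_derivative Y (at p) v)"

text \<open>Conical special complex manifold structure (J, nabla = d + G, xi) on Mset.
  "Complex manifold" = smooth integrable almost complex structure.\<close>
definition conical_special_complex ::
  "(tv \<Rightarrow> tv \<Rightarrow>\<^sub>L tv) \<Rightarrow> (tv \<Rightarrow> tv \<Rightarrow>\<^sub>L tv \<Rightarrow>\<^sub>L tv) \<Rightarrow> (tv \<Rightarrow> tv) \<Rightarrow> bool" where
  "conical_special_complex J G \<xi> \<longleftrightarrow>
     smooth_on Mset J \<and> smooth_on Mset G \<and> smooth_on Mset \<xi> \<and>
     (\<forall>p\<in>Mset. \<forall>v. blinfun_apply (J p) (blinfun_apply (J p) v) = - v) \<and>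
     (\<forall>p\<in>Mset. \<forall>u v. nijenhuis J p u v = 0) \<and>
     (\<forall>p\<in>Mset. \<forall>u v. blinfun_apply (blinfun_apply (G p) u) v = blinfun_apply (blinfun_apply (G p) v) u) \<and>
     (\<forall>p\<in>Mset. \<forall>u v w. curv G p u v w = 0) \<and>
     (\<forall>p\<in>Mset. \<forall>u v. nablaJ G J p u v = nablaJ G J p v u) \<and>
     (\<forall>p\<in>Mset. \<xi> p \<noteq> 0) \<and>
     (\<forall>p\<in>Mset. \<forall>u. nablaV G \<xi> p u = u) \<and>
     (\<forall>p\<in>Mset. \<forall>v. lieJ J \<xi> p v = 0)"

definition trivial_csc :: "(tv \<Rightarrow> tv \<Rightarrow>\<^sub>L tv) \<Rightarrow> (tv \<Rightarrow> tv \<Rightarrow>\<^sub>L tv \<Rightarrow>\<^sub>L tv) \<Rightarrow> bool" where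
  "trivial_csc J G \<longleftrightarrow> (\<forall>p\<in>Mset. \<forall>u v. nablaJ G J p u v = 0)"

text \<open>xi - i J xi generates the standard C^*-action of the trivial bundle
  (xi = r d/dr, J xi = d/dtheta), and the projection is holomorphic onto (C^2, Jbar).\<close>
definition bundle_compatible :: "(tv \<Rightarrow> tv \<Rightarrow>\<^sub>L tv) \<Rightarrow> bool" where
  "bundle_compatible J \<longleftrightarrow>
     (\<forall>p\<in>Mset. blinfun_apply (J p) (xi p) = (0, 0, \<i> * fib p)) \<and>
     (\<forall>p\<in>Mset. \<forall>v. pr (blinfun_apply (J p) v) = Jbar (pr v))"

text \<open>Principal C^*-connection omega (C-valued, invariant, reproducing the
  generators) of type (1,0), i.e. omega o J = i omega (J-invariant kernel).\<close>
definition principal_conn_10 :: "(tv \<Rightarrow> tv \<Rightarrow>\<^sub>L tv) \<Rightarrow> (tv \<Rightarrow> tv \<Rightarrow>\<^sub>L complex) \<Rightarrow> bool" where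
  "principal_conn_10 J \<omega> \<longleftrightarrow>
     smooth_on Mset \<omega> \<and>
     (\<forall>p\<in>Mset. blinfun_apply (\<omega> p) (xi p) = 1) \<and>
     (\<forall>p\<in>Mset. blinfun_apply (\<omega> p) (blinfun_apply (J p) (xi p)) = \<i>) \<and>
     (\<forall>p\<in>Mset. \<forall>a v. a \<noteq> 0 \<longrightarrow> blinfun_apply (\<omega> (Rmult a p)) (Rmult a v) = blinfun_apply (\<omega> p) v) \<and>
     (\<forall>p\<in>Mset. \<forall>v. blinfun_apply (\<omega> p) (blinfun_apply (J p) v) = \<i> * blinfun_apply (\<omega> p) v)"

text \<open>The sqrt(-1)-component eta = Im omega is flat: d eta = 0.\<close>
definition eta_flat :: "(tv \<Rightarrow> tv \<Rightarrow>\<^sub>L complex) \<Rightarrow> bool" where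
  "eta_flat \<omega> \<longleftrightarrow>
     (\<forall>p\<in>Mset. \<forall>u v. Im (blinfun_apply (frechet_derivative \<omega> (at p) u) v
                          - blinfun_apply (frechet_derivative \<omega> (at p) v) u) = 0)"

definition hl :: "(tv \<Rightarrow> tv \<Rightarrow>\<^sub>L complex) \<Rightarrow> tv \<Rightarrow> bv \<Rightarrow> tv" where
  "hl \<omega> p X = (THE v. pr v = X \<and> blinfun_apply (\<omega> p) v = 0)"

text \<open>c-projective change of a connection on (C^2, Jbar) by a 1-form Phi\<close>
definition cproj_term :: "(bv \<Rightarrow> bv \<Rightarrow>\<^sub>L real) \<Rightarrow> bv \<Rightarrow> bv \<Rightarrow> bv \<Rightarrow> bv" where
  "cproj_term \<Phi> x u v =
     blinfun_apply (\<Phi> x) u *\<^sub>R v + blinfun_apply (\<Phi> x) v *\<^sub>R u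
     - blinfun_apply (\<Phi> x) (Jbar u) *\<^sub>R Jbar v - blinfun_apply (\<Phi> x) (Jbar v) *\<^sub>R Jbar u"

text \<open>The canonical c-projective structure (class of D^(omega), D = nabla - 1/2 J A,
  D^(omega)_X Y = pr_*(D_{X~} Y~)) equals the class [Dbar] of the standard flat
  connection Dbar_X Y = dY(X) on C^2.\<close>
definition canonical_cproj_is_std ::
  "(tv \<Rightarrow> tv \<Rightarrow>\<^sub>L tv) \<Rightarrow> (tv \<Rightarrow> tv \<Rightarrow>\<^sub>L tv \<Rightarrow>\<^sub>L tv) \<Rightarrow> (tv \<Rightarrow> tv \<Rightarrow>\<^sub>L complex) \<Rightarrow> bool" where
  "canonical_cproj_is_std J G \<omega> \<longleftrightarrow>
     (\<exists>\<Phi>. smooth_on UNIV \<Phi> \<and>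
        (\<forall>X Y :: bv \<Rightarrow> bv. smooth_on UNIV X \<and> smooth_on UNIV Y \<longrightarrow>
          (\<forall>p\<in>Mset.
             (let Xt = (\<lambda>q. hl \<omega> q (X (pr q)));
                  Yt = (\<lambda>q. hl \<omega> q (Y (pr q)));
                  x = pr p
              in pr (nablaV G Yt p (Xt p)
                     - (1/2) *\<^sub>R blinfun_apply (J p) (nablaJ G J p (Xt p) (Yt p)))
                 = frechet_derivative Y (at x) (X x) + cproj_term \<Phi> x (X x) (Y x)))))"

text \<open>B = e^{2 theta J} A, theta the polar angle of the fibre coordinate\<close>
definition Bt :: "(tv \<Rightarrow> tv \<Rightarrow>\<^sub>L tv) \<Rightarrow> (tv \<Rightarrow> tv \<Rightarrow>\<^sub>L tv \<Rightarrow>\<^sub>L tv) \<Rightarrow> tv \<Rightarrow> tv \<Rightarrow> tv \<Rightarrow> tv" where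
  "Bt J G p u v =
     cos (2 * Arg (fib p)) *\<^sub>R nablaJ G J p u v
     + sin (2 * Arg (fib p)) *\<^sub>R blinfun_apply (J p) (nablaJ G J p u v)"

text \<open>Bbar and cbar from the decomposition
  B_{X~} Y~ = (Bbar_X Y)~ + cbar(X,Y) xi + cbar(X, Jbar Y) J xi\<close>
definition barB :: "(tv \<Rightarrow> tv \<Rightarrow>\<^sub>L tv) \<Rightarrow> (tv \<Rightarrow> tv \<Rightarrow>\<^sub>L tv \<Rightarrow>\<^sub>L tv) \<Rightarrow> (tv \<Rightarrow> tv \<Rightarrow>\<^sub>L complex)
    \<Rightarrow> tv \<Rightarrow> bv \<Rightarrow> bv \<Rightarrow> bv" where
  "barB J G \<omega> p X Y = pr (Bt J G p (hl \<omega> p X) (hl \<omega> p Y))"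

definition barc :: "(tv \<Rightarrow> tv \<Rightarrow>\<^sub>L tv) \<Rightarrow> (tv \<Rightarrow> tv \<Rightarrow>\<^sub>L tv \<Rightarrow>\<^sub>L tv) \<Rightarrow> (tv \<Rightarrow> tv \<Rightarrow>\<^sub>L complex)
    \<Rightarrow> tv \<Rightarrow> bv \<Rightarrow> bv \<Rightarrow> real" where
  "barc J G \<omega> p X Y =
     (THE c. \<exists>c'. Bt J G p (hl \<omega> p X) (hl \<omega> p Y)
               = hl \<omega> p (barB J G \<omega> p X Y) + c *\<^sub>R xi p
                 + c' *\<^sub>R blinfun_apply (J p) (xi p))"

definition tr :: "('a::euclidean_space \<Rightarrow> 'a) \<Rightarrow> real" where
  "tr f = (\<Sum>b\<in>Basis. inner (f b) b)"

end

theory Submission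
  imports Defs
begin

definition mnm :: "int \<Rightarrow> int \<Rightarrow> tv \<Rightarrow> complex" where
  "mnm m n p = fib p powi m * cnj (fib p powi n)"

lemma bl_fib: "bounded_linear fib"
  unfolding fib_def by (intro bounded_linear_intros)

lemma open_Mset: "open Mset"
proof -
  have "Mset = fib -` (- {0})" unfolding Mset_def fib_def by auto
  moreover have "continuous_on UNIV fib" using bl_fib linear_continuous_on by blast
  ultimately show ?thesis by (metis open_Compl closed_singleton open_vimage)
qed

lemma mono_deriv:
  assumes "p \<in> Mset"
  shows "(mnm m n has_derivative
     (\<lambda>v. (of_int m * fib v) * mnm (m-1) n p + (of_int n * cnj (fib v)) * mnm m (n-1) p)) (at p)"
proof -
  have w: "fib p \<noteq> 0" using assms unfolding Mset_def fib_def by auto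
  have d1: "((\<lambda>q. fib q powi m) has_derivative (\<lambda>h. fib h * (of_int m * fib p powi (m - 1)))) (at p)"
    by (rule has_derivative_power_int) (auto intro: bounded_linear.has_derivative[OF bl_fib] simp: w)
  have d2: "((\<lambda>q. fib q powi n) has_derivative (\<lambda>h. fib h * (of_int n * fib p powi (n - 1)))) (at p)"
    by (rule has_derivative_power_int) (auto intro: bounded_linear.has_derivative[OF bl_fib] simp: w)
  have d3: "((\<lambda>q. cnj (fib q powi n)) has_derivative (\<lambda>h. cnj (fib h * (of_int n * fib p powi (n - 1))))) (at p)"
    using bounded_linear.has_derivative[OF bounded_linear_cnj d2] .
  have "(mnm m n has_derivative (\<lambda>h. fib p powi m * cnj (fib h * (of_int n * fib p powi (n - 1))) + fib h * (of_int m * fib p powi (m - 1)) * cnj (fib p powi n))) (at p)"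
    unfolding mnm_def[abs_def] using has_derivative_mult[OF d1 d3] by simp
  then show ?thesis
    by (rule has_derivative_eq_rhs) (auto simp: fun_eq_iff mnm_def algebra_simps)
qed

definition fun_of :: "((complex \<Rightarrow>\<^sub>L 'b::real_normed_vector) \<times> int \<times> int) list \<Rightarrow> tv \<Rightarrow> 'b" where
  "fun_of L p = sum_list (map (\<lambda>(T,m,n). blinfun_apply T (mnm m n p)) L)"

definition dL :: "tv \<Rightarrow> ((complex \<Rightarrow>\<^sub>L 'b::real_normed_vector) \<times> int \<times> int) list \<Rightarrow> ((complex \<Rightarrow>\<^sub>L 'b) \<times> int \<times> int) list" where
  "dL v L = concat (map (\<lambda>(T,m,n). [(T o\<^sub>L blinfun_mult_right (of_int m * fib v), m-1, n),
                                      (T o\<^sub>L blinfun_mult_right (of_int n * cnj (fib v)), m, n-1)]) L)"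

lemma fun_of_deriv:
  assumes "p \<in> Mset"
  shows "(fun_of L has_derivative (\<lambda>v. fun_of (dL v L) p)) (at p)"
proof (induction L)
  case Nil
  then show ?case by (simp add: fun_of_def[abs_def] dL_def)
next
  case (Cons a L)
  obtain T m n where a: "a = (T,m,n)" by (cases a) auto
  have h: "((\<lambda>q. blinfun_apply T (mnm m n q)) has_derivative
     (\<lambda>v. blinfun_apply T ((of_int m * fib v) * mnm (m-1) n p + (of_int n * cnj (fib v)) * mnm m (n-1) p))) (at p)"
    by (rule bounded_linear.has_derivative[OF blinfun.bounded_linear_right mono_deriv[OF assms]])
  have "((\<lambda>q. blinfun_apply T (mnm m n q) + fun_of L q) has_derivative
     (\<lambda>v. blinfun_apply T ((of_int m * fib v) * mnm (m-1) n p + (of_int n * cnj (fib v)) * mnm m (n-1) p)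
          + fun_of (dL v L) p)) (at p)"
    by (rule has_derivative_add[OF h Cons.IH])
  then show ?case
    by (simp add: a fun_of_def[abs_def] dL_def blinfun.add_right add.assoc)
qed

definition Sm :: "(tv \<Rightarrow> 'b::real_normed_vector) \<Rightarrow> bool" where
  "Sm g \<longleftrightarrow> (\<exists>L. \<forall>q\<in>Mset. g q = fun_of L q)"

lemma Sm_smooth:
  assumes "Sm g" shows "smooth_on Mset g"
  using assms
proof (coinduction arbitrary: g rule: smooth_on.coinduct)
  case (smooth_on g)
  then obtain L where L: "\<And>q. q \<in> Mset \<Longrightarrow> g q = fun_of L q" unfolding Sm_def by blast
  have hg: "(g has_derivative (\<lambda>v. fun_of (dL v L) p)) (at p)" if "p \<in> Mset" for p
    by (rule has_derivative_transform_within_open[OF fun_of_deriv[OF that] open_Mset that]) (simp add: L)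
  have fd: "frechet_derivative g (at p) = (\<lambda>v. fun_of (dL v L) p)" if "p \<in> Mset" for p
    using frechet_derivative_at[OF hg[OF that]] by simp
  have "g differentiable_on Mset"
    unfolding differentiable_on_def
    using hg by (meson differentiableI has_derivative_at_withinI)
  moreover have "Sm (\<lambda>p. frechet_derivative g (at p) v)" for v
    unfolding Sm_def by (rule exI[of _ "dL v L"]) (simp add: fd)
  ultimately show ?case by blast
qed

lemma bl_fin: "linear f \<Longrightarrow> bounded_linear (f::'a::euclidean_space \<Rightarrow> 'b::real_normed_vector)"
  by (simp add: linear_conv_bounded_linear)

lemma blin2:
  fixes f :: "'a::euclidean_space \<Rightarrow> 'c::euclidean_space \<Rightarrow> 'b::real_normed_vector"
  assumes "\<And>u. linear (f u)" and "\<And>v. linear (\<lambda>u. f u v)"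
  shows "bounded_linear (\<lambda>u. Blinfun (f u))"
proof (rule bl_fin, rule linearI)
  have ap: "blinfun_apply (Blinfun (f u)) = f u" for u
    using assms(1) bl_fin bounded_linear_Blinfun_apply by blast
  show "Blinfun (f (x + y)) = Blinfun (f x) + Blinfun (f y)" for x y
    by (rule blinfun_eqI) (simp add: ap blinfun.add_left blinfun.scaleR_left linear_add[OF assms(2)])
  show "Blinfun (f (r *\<^sub>R x)) = r *\<^sub>R Blinfun (f x)" for r x
    by (rule blinfun_eqI) (simp add: ap linear_scale[OF assms(2)] blinfun.scaleR_left)
qed

lemma Bap: "linear f \<Longrightarrow> blinfun_apply (Blinfun (f::'a::euclidean_space \<Rightarrow> 'b::real_normed_vector)) = f"
  using bl_fin bounded_linear_Blinfun_apply by blast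

definition J0 :: "tv \<Rightarrow>\<^sub>L tv" where
  "J0 = Blinfun (\<lambda>v. (\<i> * fst v, \<i> * fst (snd v), \<i> * snd (snd v)))"

lemma J0_ap[simp]: "blinfun_apply J0 v = (\<i> * fst v, \<i> * fst (snd v), \<i> * snd (snd v))"
  unfolding J0_def by (subst Bap) (auto intro!: linearI simp: algebra_simps scaleR_conv_of_real)

definition om1 :: "complex \<Rightarrow> tv \<Rightarrow>\<^sub>L complex" where
  "om1 z = Blinfun (\<lambda>v. z * snd (snd v))"

lemma om1_ap[simp]: "blinfun_apply (om1 z) v = z * snd (snd v)"
  unfolding om1_def by (subst Bap) (auto intro!: linearI simp: algebra_simps scaleR_conv_of_real)

definition Tom :: "complex \<Rightarrow>\<^sub>L (tv \<Rightarrow>\<^sub>L complex)" where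
  "Tom = Blinfun om1"

lemma Tom_ap[simp]: "blinfun_apply Tom z = om1 z"
  unfolding Tom_def
  by (subst Bap) (auto intro!: linearI blinfun_eqI simp: algebra_simps scaleR_conv_of_real blinfun.add_left blinfun.scaleR_left)

definition omf :: "tv \<Rightarrow> tv \<Rightarrow>\<^sub>L complex" where
  "omf p = om1 (1 / fib p)"

definition Gv :: "complex \<Rightarrow> complex \<Rightarrow> tv \<Rightarrow> tv \<Rightarrow> tv" where
  "Gv a b u v = (a * (snd (snd u) * fst v + fst u * snd (snd v)),
                 a * (snd (snd u) * fst (snd v) + fst (snd u) * snd (snd v)) + b * cnj (fst u * fst v), 0)"

definition G2 :: "complex \<Rightarrow> complex \<Rightarrow> tv \<Rightarrow>\<^sub>L tv \<Rightarrow>\<^sub>L tv" where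
  "G2 a b = Blinfun (\<lambda>u. Blinfun (Gv a b u))"

lemma lin_Gv1: "linear (Gv a b u)"
  by (auto intro!: linearI simp: Gv_def algebra_simps scaleR_conv_of_real)
lemma lin_Gv2: "linear (\<lambda>u. Gv a b u v)"
  by (auto intro!: linearI simp: Gv_def algebra_simps scaleR_conv_of_real)

lemma G2_ap[simp]: "blinfun_apply (blinfun_apply (G2 a b) u) v = Gv a b u v"
  unfolding G2_def
  by (simp add: bounded_linear_Blinfun_apply[OF blin2[OF lin_Gv1 lin_Gv2]] Bap[OF lin_Gv1])

lemma Gv_lin_a: "Gv (a + a') b u v = Gv a b u v + Gv a' 0 u v"
  "Gv a (b + b') u v = Gv a b u v + Gv 0 b' u v"
  "Gv (of_real r * a) 0 u v = r *\<^sub>R Gv a 0 u v"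
  "Gv 0 (of_real r * b) u v = r *\<^sub>R Gv 0 b u v"
  by (auto simp: Gv_def algebra_simps scaleR_conv_of_real)

definition TG1 :: "complex \<Rightarrow>\<^sub>L (tv \<Rightarrow>\<^sub>L tv \<Rightarrow>\<^sub>L tv)" where
  "TG1 = Blinfun (\<lambda>z. G2 z 0)"
definition TG2 :: "complex \<Rightarrow>\<^sub>L (tv \<Rightarrow>\<^sub>L tv \<Rightarrow>\<^sub>L tv)" where
  "TG2 = Blinfun (\<lambda>z. G2 0 z)"

lemma TG1_ap[simp]: "blinfun_apply TG1 z = G2 z 0"
  unfolding TG1_def
  by (subst Bap) (auto intro!: linearI blinfun_eqI simp: blinfun.add_left blinfun.scaleR_left Gv_def algebra_simps scaleR_conv_of_real)
lemma TG2_ap[simp]: "blinfun_apply TG2 z = G2 0 z"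
  unfolding TG2_def
  by (subst Bap) (auto intro!: linearI blinfun_eqI simp: blinfun.add_left blinfun.scaleR_left Gv_def algebra_simps scaleR_conv_of_real)

definition Gf :: "tv \<Rightarrow> tv \<Rightarrow>\<^sub>L tv \<Rightarrow>\<^sub>L tv" where
  "Gf p = G2 (1 / fib p) (cnj (fib p) / fib p)"

definition Jf :: "tv \<Rightarrow> tv \<Rightarrow>\<^sub>L tv" where "Jf p = J0"

lemma mnm_vals:
  "mnm 0 0 p = 1" "mnm 1 0 p = fib p" "mnm (-1) 0 p = 1 / fib p" "mnm (-1) 1 p = cnj (fib p) / fib p"
  "mnm (-2) 0 p = 1 / (fib p)^2" "mnm (-1) (-1) p = 1 / (fib p * cnj (fib p))"
  "mnm (-2) 1 p = cnj (fib p) / (fib p)^2"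
  by (auto simp: mnm_def power_int_minus field_simps)

lemma Gf_rep: "Gf p = fun_of [(TG1, -1, 0), (TG2, -1, 1)] p"
  by (auto intro!: blinfun_eqI simp: Gf_def fun_of_def mnm_vals blinfun.add_left blinfun.scaleR_left Gv_def)

lemma fd_rep:
  assumes "p \<in> Mset" "\<And>q. q \<in> Mset \<Longrightarrow> g q = fun_of L q"
  shows "frechet_derivative g (at p) = (\<lambda>v. fun_of (dL v L) p)"
proof -
  have "(g has_derivative (\<lambda>v. fun_of (dL v L) p)) (at p)"
    by (rule has_derivative_transform_within_open[OF fun_of_deriv[OF assms(1)] open_Mset assms(1)]) (simp add: assms(2))
  then show ?thesis using frechet_derivative_at by metis
qed

definition cstJ :: "complex \<Rightarrow>\<^sub>L (tv \<Rightarrow>\<^sub>L tv)" where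
  "cstJ = Blinfun (\<lambda>z. Re z *\<^sub>R J0)"
lemma cstJ_ap[simp]: "blinfun_apply cstJ z = Re z *\<^sub>R J0"
  unfolding cstJ_def by (subst Bap) (auto intro!: linearI simp: algebra_simps)

definition Txi :: "complex \<Rightarrow>\<^sub>L tv" where
  "Txi = Blinfun (\<lambda>z. (0, 0, z))"
lemma Txi_ap[simp]: "blinfun_apply Txi z = (0,0,z)"
  unfolding Txi_def by (subst Bap) (auto intro!: linearI simp: algebra_simps)

lemma Jf_rep: "Jf q = fun_of [(cstJ, 0, 0)] q"
  by (simp add: Jf_def fun_of_def mnm_vals)
lemma xi_rep: "xi q = fun_of [(Txi, 1, 0)] q"
  by (simp add: xi_def fun_of_def mnm_vals)
lemma omf_rep: "omf q = fun_of [(Tom, -1, 0)] q"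
  by (simp add: omf_def fun_of_def mnm_vals)

lemma smooth_all: "smooth_on Mset Jf" "smooth_on Mset xi" "smooth_on Mset omf" "smooth_on Mset Gf"
  by (rule Sm_smooth, unfold Sm_def, metis Jf_rep xi_rep omf_rep Gf_rep)+

lemma w_nz: "p \<in> Mset \<Longrightarrow> fib p \<noteq> 0"
  by (simp add: Mset_def fib_def)

lemma dJ: "p \<in> Mset \<Longrightarrow> frechet_derivative Jf (at p) = (\<lambda>_. 0)"
proof -
  have "(Jf has_derivative (\<lambda>_. 0)) (at p)" unfolding Jf_def[abs_def] by (rule has_derivative_const)
  then show ?thesis using frechet_derivative_at by metis
qed

lemma dxi: "p \<in> Mset \<Longrightarrow> frechet_derivative xi (at p) u = (0, 0, fib u)"
  by (subst fd_rep[OF _ xi_rep]) (auto simp: dL_def fun_of_def mnm_vals)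

lemma domf: "p \<in> Mset \<Longrightarrow> frechet_derivative omf (at p) x = om1 (- fib x / (fib p)^2)"
  by (subst fd_rep[OF _ omf_rep]) (auto intro!: blinfun_eqI simp: dL_def fun_of_def mnm_vals)

lemma dGf: "p \<in> Mset \<Longrightarrow> frechet_derivative Gf (at p) x =
   G2 (- fib x / (fib p)^2) (cnj (fib x) / fib p - cnj (fib p) * fib x / (fib p)^2)"
  apply (subst fd_rep[OF _ Gf_rep], assumption)
  apply (rule blinfun_eqI)+
  apply (auto simp: dL_def fun_of_def mnm_vals blinfun.add_left Gv_def w_nz field_simps)
  done

lemma Gf_ap[simp]: "blinfun_apply (blinfun_apply (Gf p) u) v = Gv (1 / fib p) (cnj (fib p) / fib p) u v"
  by (simp add: Gf_def)
lemma Jf_ap[simp]: "blinfun_apply (Jf p) v = (\<i> * fst v, \<i> * fst (snd v), \<i> * snd (snd v))"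
  by (simp add: Jf_def)
lemma omf_ap[simp]: "blinfun_apply (omf p) v = snd (snd v) / fib p"
  by (simp add: omf_def)

lemma nablaJ_eq: "p \<in> Mset \<Longrightarrow> nablaJ Gf Jf p u v = (0, -2 * \<i> * (cnj (fib p) / fib p) * cnj (fst u * fst v), 0)"
  by (simp add: nablaJ_def dJ Gv_def algebra_simps)

lemma curv0: "p \<in> Mset \<Longrightarrow> curv Gf p u v x = 0"
  using w_nz[of p] unfolding fib_def
  apply (simp add: curv_def dGf Gv_def prod_eq_iff fib_def)
  apply (simp add: field_simps power2_eq_square)
  done

lemma csc: "conical_special_complex Jf Gf xi"
proof -
  have a: "nijenhuis Jf p u v = 0" if p: "p \<in> Mset" for p u v by (simp add: nijenhuis_def dJ p)
  have b: "nablaJ Gf Jf p u v = nablaJ Gf Jf p v u" if p: "p \<in> Mset" for p u v by (simp add: nablaJ_eq p mult.commute)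
  have c: "xi p \<noteq> 0" if p: "p \<in> Mset" for p using w_nz[OF p] by (simp add: xi_def prod_eq_iff)
  have d: "nablaV Gf xi p u = u" if p: "p \<in> Mset" for p u using w_nz[OF p] by (simp add: nablaV_def dxi p xi_def Gv_def fib_def)
  have e: "lieJ Jf xi p v = 0" if p: "p \<in> Mset" for p v by (simp add: lieJ_def dJ dxi p fib_def zero_prod_def)
  have f: "blinfun_apply (blinfun_apply (Gf p) u) v = blinfun_apply (blinfun_apply (Gf p) v) u" for p u v
    by (simp add: Gv_def algebra_simps)
  show ?thesis unfolding conical_special_complex_def
    using a b c d e f curv0 smooth_all by simp
qed

lemma hl_eq: "p \<in> Mset \<Longrightarrow> hl omf p X = (fst X, snd X, 0)"
  unfolding hl_def using w_nz[of p]
  by (rule_tac the_equality) (auto simp: pr_def prod_eq_iff)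

definition ee :: "tv \<Rightarrow> complex" where
  "ee p = complex_of_real (cos (2 * Arg (fib p))) + \<i> * complex_of_real (sin (2 * Arg (fib p)))"

lemma Bt_eq: "p \<in> Mset \<Longrightarrow> Bt Jf Gf p u v = (0, ee p * (-2 * \<i> * (cnj (fib p) / fib p) * cnj (fst u * fst v)), 0)"
  by (simp add: Bt_def nablaJ_eq ee_def scaleR_conv_of_real algebra_simps)

lemma barB_eq: "p \<in> Mset \<Longrightarrow> barB Jf Gf omf p X Y = (0, ee p * (-2 * \<i> * (cnj (fib p) / fib p) * cnj (fst X * fst Y)))"
  by (simp add: barB_def Bt_eq hl_eq pr_def)

lemma tr_zero: "p \<in> Mset \<Longrightarrow> tr (\<lambda>Z. barB Jf Gf omf p X (barB Jf Gf omf p Y Z)) = 0"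
  by (simp add: barB_eq tr_def flip: zero_prod_def)

lemma barB_nz: "\<exists>p\<in>Mset. \<exists>X Y. barB Jf Gf omf p X Y \<noteq> 0"
proof -
  have p: "(0,0,1) \<in> Mset" by (simp add: Mset_def)
  have "barB Jf Gf omf (0,0,1) (1,0) (1,0) \<noteq> 0"
    by (simp add: barB_eq[OF p] ee_def fib_def zero_prod_def)
  then show ?thesis using p by blast
qed

lemma barc_zero: "p \<in> Mset \<Longrightarrow> barc Jf Gf omf p X Y = 0"
  unfolding barc_def
proof (rule the_equality)
  assume p: "p \<in> Mset"
  show "\<exists>c'. Bt Jf Gf p (hl omf p X) (hl omf p Y) = hl omf p (barB Jf Gf omf p X Y) + 0 *\<^sub>R xi p + c' *\<^sub>R blinfun_apply (Jf p) (xi p)"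
    by (rule exI[of _ 0]) (simp add: Bt_eq[OF p] hl_eq[OF p] barB_eq[OF p])
  fix c assume "\<exists>c'. Bt Jf Gf p (hl omf p X) (hl omf p Y) = hl omf p (barB Jf Gf omf p X Y) + c *\<^sub>R xi p + c' *\<^sub>R blinfun_apply (Jf p) (xi p)"
  then obtain c' where "Bt Jf Gf p (hl omf p X) (hl omf p Y) = hl omf p (barB Jf Gf omf p X Y) + c *\<^sub>R xi p + c' *\<^sub>R blinfun_apply (Jf p) (xi p)" by blast
  then have "(complex_of_real c + \<i> * complex_of_real c') * fib p = 0"
    by (simp add: Bt_eq[OF p] hl_eq[OF p] barB_eq[OF p] xi_def prod_eq_iff scaleR_conv_of_real algebra_simps)
  then have "complex_of_real c + \<i> * complex_of_real c' = 0" using w_nz[OF p] by simp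
  then show "c = 0" by (simp add: complex_eq_iff)
qed

lemma nontriv: "\<not> trivial_csc Jf Gf"
proof -
  have p: "(0,0,1) \<in> Mset" by (simp add: Mset_def)
  have "nablaJ Gf Jf (0,0,1) (1,0,0) (1,0,0) \<noteq> 0"
    by (simp add: nablaJ_eq[OF p] fib_def zero_prod_def)
  then show ?thesis unfolding trivial_csc_def using p by blast
qed

lemma om_nablaJ: "p \<in> Mset \<Longrightarrow> blinfun_apply (omf p) (nablaJ Gf Jf p u v) = 0"
  by (simp add: nablaJ_eq)

lemma bcomp: "bundle_compatible Jf"
  by (simp add: bundle_compatible_def xi_def fib_def pr_def Jbar_def)

lemma pconn: "principal_conn_10 Jf omf"
  unfolding principal_conn_10_def
  using smooth_all w_nz by (auto simp: xi_def fib_def Rmult_def)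

lemma etaf: "eta_flat omf"
  unfolding eta_flat_def by (simp add: domf fib_def)

lemma smooth_const: "smooth_on S (\<lambda>x. c)"
proof (coinduction arbitrary: c rule: smooth_on.coinduct)
  case (smooth_on c)
  have fd: "frechet_derivative (\<lambda>x. c) (at p) = (\<lambda>_. 0)" for p
    using frechet_derivative_at[OF has_derivative_const] by metis
  show ?case by (auto simp: fd)
qed

definition emb :: "bv \<Rightarrow> tv" where "emb x = (fst x, snd x, 0)"

lemma bl_emb: "bounded_linear emb"
  unfolding emb_def by (intro bounded_linear_intros)
lemma bl_pr: "bounded_linear pr"
  unfolding pr_def by (intro bounded_linear_intros)

lemma cproj: "canonical_cproj_is_std Jf Gf omf"
  unfolding canonical_cproj_is_std_def
proof (intro exI[of _ "\<lambda>x. 0"] conjI allI impI ballI)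
  show "smooth_on UNIV (\<lambda>x::bv. 0::bv \<Rightarrow>\<^sub>L real)" by (rule smooth_const)
  fix X Y :: "bv \<Rightarrow> bv" and p
  assume XY: "smooth_on UNIV X \<and> smooth_on UNIV Y" and p: "p \<in> Mset"
  define x where "x = pr p"
  have "Y differentiable_on UNIV" using XY smooth_on.cases by blast
  then have "Y differentiable (at x)" unfolding differentiable_on_def by (metis UNIV_I)
  then have dY: "(Y has_derivative frechet_derivative Y (at x)) (at x)"
    by (simp add: frechet_derivative_works)
  have d1: "((\<lambda>q. emb (Y (pr q))) has_derivative (\<lambda>u. emb (frechet_derivative Y (at x) (pr u)))) (at p)"
    apply (rule bounded_linear.has_derivative[OF bl_emb])
    apply (rule diff_chain_at[OF bounded_linear.has_derivative[OF bl_pr has_derivative_ident], unfolded o_def])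
    using dY by (simp add: x_def)
  have d2: "((\<lambda>q. hl omf q (Y (pr q))) has_derivative (\<lambda>u. emb (frechet_derivative Y (at x) (pr u)))) (at p)"
    by (rule has_derivative_transform_within_open[OF d1 open_Mset p]) (simp add: hl_eq emb_def)
  have fd: "frechet_derivative (\<lambda>q. hl omf q (Y (pr q))) (at p) = (\<lambda>u. emb (frechet_derivative Y (at x) (pr u)))"
    using frechet_derivative_at[OF d2] by metis
  show "let Xt = (\<lambda>q. hl omf q (X (pr q))); Yt = (\<lambda>q. hl omf q (Y (pr q))); x = pr p
        in pr (nablaV Gf Yt p (Xt p) - (1/2) *\<^sub>R blinfun_apply (Jf p) (nablaJ Gf Jf p (Xt p) (Yt p)))
           = frechet_derivative Y (at x) (X x) + cproj_term (\<lambda>x. 0) x (X x) (Y x)"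
    using w_nz[OF p] unfolding Let_def nablaV_def fd x_def[symmetric]
    by (simp add: hl_eq[OF p] nablaJ_eq[OF p] emb_def pr_def x_def cproj_term_def Gv_def
        scaleR_conv_of_real algebra_simps)
qed

theorem proposition4p21:
  shows "\<exists>(J :: tv \<Rightarrow> tv \<Rightarrow>\<^sub>L tv) (G :: tv \<Rightarrow> tv \<Rightarrow>\<^sub>L tv \<Rightarrow>\<^sub>L tv) (\<omega> :: tv \<Rightarrow> tv \<Rightarrow>\<^sub>L complex).
           conical_special_complex J G xi \<and>
           bundle_compatible J \<and>
           principal_conn_10 J \<omega> \<and>
           eta_flat \<omega> \<and>
           canonical_cproj_is_std J G \<omega> \<and>
           (\<exists>p\<in>Mset. \<exists>X Y. barB J G \<omega> p X Y \<noteq> 0) \<and>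
           (\<forall>p\<in>Mset. \<forall>X Y. tr (\<lambda>Z. barB J G \<omega> p X (barB J G \<omega> p Y Z)) = 0) \<and>
           (\<forall>p\<in>Mset. \<forall>X Y. barc J G \<omega> p X Y = 0) \<and>
           \<not> trivial_csc J G \<and>
           (\<forall>p\<in>Mset. \<forall>u v. blinfun_apply (\<omega> p) (nablaJ G J p u v) = 0)"
  using csc bcomp pconn etaf cproj barB_nz tr_zero barc_zero nontriv om_nablaJ by blast

end
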